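(* With the notation below, for every $v\in\hat T\setminus\partial\hat T$, $$m_v=\theta\sum_{w:(v,w)\in\hat T}D_w^*\Big(\int f(x_w^\xi)\,dQ_w^+(\xi)-\int f(x_w^\xi)\,dQ_w^-(\xi)\Big),\qquad f(x)=\log\frac{\cosh(x/2)+\theta\sinh(x/2)}{\cosh(x/2)-\theta\sinh(x/2)}.$$
   Context: $T$ is a finite rooted tree (root $\rho$, leaves $\partial T$, $T_v$ the subtree of $v$ and its descendants), $\beta>0$, $\theta=\tanh\beta$, Ising Gibbs density $\propto\exp(\beta\sum_{uv}\sigma(u)\sigma(v))$, $\tau\in\{\pm1\}^{\partial T}$, and $\mu_v^\tau$ is the Gibbs measure on $T_v$ conditioned on $\tau$ on $\partial T\cap T_v$. $\hat T$ is a connected subtree of $T\setminus\partial T$ containing $\rho$ with leaves $\partial\hat T$, $\hat T_v=T_v\cap\hat T$; $\hat\mu_v^\xi$ is the Gibbs measure on $\hat T_v$ conditioned on $\xi\in\{\pm1\}^{\partial\hat T}$ on $\partial\hat T\cap\hat T_v$. $Q_v^{\pm}(\xi)=\mu_v^\tau(\sigma_{\partial\hat T_v}=\xi_{\partial\hat T_v}\mid\sigma(v)=\pm1)$; $x_v^\xi=\log\big(\hat\mu_v^\xi(\sigma(v)=1)/\hat\mu_v^\xi(\sigma(v)=-1)\big)$ (equal to $\pm\infty$ at leaves of $\hat T$); $m_v=\int x_v^\xi dQ_v^+-\int x_v^\xi dQ_v^-$; $x_w^*=\log\big(\mu_w^\tau(\sigma(w)=1)/\mu_w^\tau(\sigma(w)=-1)\big)$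 and $D_w^*=\cosh^2\beta/(\cosh^2\beta+\cosh^2(x_w^*/2)-1)$. *)

theory Defs
  imports Complex_Main "HOL-Library.Extended_Real" "HOL-Library.FuncSet"
begin

text \<open>A finite rooted tree with vertex set V, root r and parent map par
 (convention: par r = r). The edges are the pairs (par w, w) for w in V - {r}.\<close>

definition rooted_tree :: "'v set \<Rightarrow> 'v \<Rightarrow> ('v \<Rightarrow> 'v) \<Rightarrow> bool" where
  "rooted_tree V r par \<longleftrightarrow> finite V \<and> r \<in> V \<and> par r = r \<and>
     (\<forall>v\<in>V - {r}. par v \<in> V) \<and> (\<forall>v\<in>V. \<exists>n. (par ^^ n) v = r)"

definition children :: "'v set \<Rightarrow> 'v \<Rightarrow> ('v \<Rightarrow> 'v) \<Rightarrow> 'v \<Rightarrow> 'v set" where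
  "children V r par v = {w \<in> V. w \<noteq> r \<and> par w = v}"

definition leaves :: "'v set \<Rightarrow> 'v \<Rightarrow> ('v \<Rightarrow> 'v) \<Rightarrow> 'v set" where
  "leaves V r par = {v \<in> V. children V r par v = {}}"

definition subtree :: "'v set \<Rightarrow> ('v \<Rightarrow> 'v) \<Rightarrow> 'v \<Rightarrow> 'v set" where
  "subtree V par v = {w \<in> V. \<exists>n. (par ^^ n) w = v}"

definition root_subtree :: "'v set \<Rightarrow> 'v \<Rightarrow> ('v \<Rightarrow> 'v) \<Rightarrow> 'v set \<Rightarrow> bool" where
  "root_subtree V r par H \<longleftrightarrow> H \<subseteq> V - leaves V r par \<and> r \<in> H \<and>
     (\<forall>w\<in>H - {r}. par w \<in> H)"

definition configs :: "'v set \<Rightarrow> ('v \<Rightarrow> real) set" where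
  "configs S = S \<rightarrow>\<^sub>E {-1, 1}"

definition energy :: "('v \<Rightarrow> 'v) \<Rightarrow> 'v set \<Rightarrow> 'v \<Rightarrow> ('v \<Rightarrow> real) \<Rightarrow> real" where
  "energy par S v \<sigma> = (\<Sum>w\<in>S - {v}. \<sigma> (par w) * \<sigma> w)"

definition adm :: "'v set \<Rightarrow> 'v set \<Rightarrow> ('v \<Rightarrow> real) \<Rightarrow> ('v \<Rightarrow> real) set" where
  "adm S B \<tau> = {\<sigma> \<in> configs S. \<forall>u\<in>B. \<sigma> u = \<tau> u}"

definition gibbs_prob :: "real \<Rightarrow> ('v \<Rightarrow> 'v) \<Rightarrow> 'v set \<Rightarrow> 'v \<Rightarrow> 'v set \<Rightarrow> ('v \<Rightarrow> real)
    \<Rightarrow> (('v \<Rightarrow> real) \<Rightarrow> bool) \<Rightarrow> real" where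
  "gibbs_prob \<beta> par S v B \<tau> E =
     (\<Sum>\<sigma>\<in>{\<sigma> \<in> adm S B \<tau>. E \<sigma>}. exp (\<beta> * energy par S v \<sigma>)) /
     (\<Sum>\<sigma>\<in>adm S B \<tau>. exp (\<beta> * energy par S v \<sigma>))"

definition mu :: "'v set \<Rightarrow> 'v \<Rightarrow> ('v \<Rightarrow> 'v) \<Rightarrow> real \<Rightarrow> ('v \<Rightarrow> real) \<Rightarrow> 'v
    \<Rightarrow> (('v \<Rightarrow> real) \<Rightarrow> bool) \<Rightarrow> real" where
  "mu V r par \<beta> \<tau> v E =
     gibbs_prob \<beta> par (subtree V par v) v (leaves V r par \<inter> subtree V par v) \<tau> E"

definition muhat :: "'v set \<Rightarrow> 'v \<Rightarrow> ('v \<Rightarrow> 'v) \<Rightarrow> 'v set \<Rightarrow> real \<Rightarrow> ('v \<Rightarrow> real) \<Rightarrow> 'v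
    \<Rightarrow> (('v \<Rightarrow> real) \<Rightarrow> bool) \<Rightarrow> real" where
  "muhat V r par H \<beta> \<xi> v E =
     gibbs_prob \<beta> par (subtree V par v \<inter> H) v (leaves H r par \<inter> subtree V par v) \<xi> E"

definition hleaves :: "'v set \<Rightarrow> 'v \<Rightarrow> ('v \<Rightarrow> 'v) \<Rightarrow> 'v set \<Rightarrow> 'v \<Rightarrow> 'v set" where
  "hleaves V r par H v = leaves H r par \<inter> subtree V par v"

definition Q :: "'v set \<Rightarrow> 'v \<Rightarrow> ('v \<Rightarrow> 'v) \<Rightarrow> 'v set \<Rightarrow> real \<Rightarrow> ('v \<Rightarrow> real) \<Rightarrow> real \<Rightarrow> 'v
    \<Rightarrow> ('v \<Rightarrow> real) \<Rightarrow> real" where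
  "Q V r par H \<beta> \<tau> s v \<eta> =
     mu V r par \<beta> \<tau> v (\<lambda>\<sigma>. (\<forall>u\<in>hleaves V r par H v. \<sigma> u = \<eta> u) \<and> \<sigma> v = s) /
     mu V r par \<beta> \<tau> v (\<lambda>\<sigma>. \<sigma> v = s)"

definition xhat_real :: "'v set \<Rightarrow> 'v \<Rightarrow> ('v \<Rightarrow> 'v) \<Rightarrow> 'v set \<Rightarrow> real \<Rightarrow> ('v \<Rightarrow> real) \<Rightarrow> 'v \<Rightarrow> real" where
  "xhat_real V r par H \<beta> \<xi> v =
     ln (muhat V r par H \<beta> \<xi> v (\<lambda>\<sigma>. \<sigma> v = 1) / muhat V r par H \<beta> \<xi> v (\<lambda>\<sigma>. \<sigma> v = -1))"

definition xhat :: "'v set \<Rightarrow> 'v \<Rightarrow> ('v \<Rightarrow> 'v) \<Rightarrow> 'v set \<Rightarrow> real \<Rightarrow> ('v \<Rightarrow> real) \<Rightarrow> 'v \<Rightarrow> ereal" where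
  "xhat V r par H \<beta> \<xi> v =
     (if v \<in> leaves H r par then (if \<xi> v = 1 then \<infinity> else -\<infinity>)
      else ereal (xhat_real V r par H \<beta> \<xi> v))"

definition mm :: "'v set \<Rightarrow> 'v \<Rightarrow> ('v \<Rightarrow> 'v) \<Rightarrow> 'v set \<Rightarrow> real \<Rightarrow> ('v \<Rightarrow> real) \<Rightarrow> 'v \<Rightarrow> real" where
  "mm V r par H \<beta> \<tau> v =
     (\<Sum>\<eta>\<in>configs (hleaves V r par H v). Q V r par H \<beta> \<tau> 1 v \<eta> * xhat_real V r par H \<beta> \<eta> v)
   - (\<Sum>\<eta>\<in>configs (hleaves V r par H v). Q V r par H \<beta> \<tau> (-1) v \<eta> * xhat_real V r par H \<beta> \<eta> v)"

definition xstar :: "'v set \<Rightarrow> 'v \<Rightarrow> ('v \<Rightarrow> 'v) \<Rightarrow> real \<Rightarrow> ('v \<Rightarrow> real) \<Rightarrow> 'v \<Rightarrow> real" where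
  "xstar V r par \<beta> \<tau> w =
     ln (mu V r par \<beta> \<tau> w (\<lambda>\<sigma>. \<sigma> w = 1) / mu V r par \<beta> \<tau> w (\<lambda>\<sigma>. \<sigma> w = -1))"

definition Dstar :: "'v set \<Rightarrow> 'v \<Rightarrow> ('v \<Rightarrow> 'v) \<Rightarrow> real \<Rightarrow> ('v \<Rightarrow> real) \<Rightarrow> 'v \<Rightarrow> real" where
  "Dstar V r par \<beta> \<tau> w =
     (cosh \<beta>)\<^sup>2 / ((cosh \<beta>)\<^sup>2 + (cosh (xstar V r par \<beta> \<tau> w / 2))\<^sup>2 - 1)"

text \<open>f(x) = log((cosh(x/2)+theta sinh(x/2))/(cosh(x/2)-theta sinh(x/2))),
  extended continuously to +-infinity (limits +-log((1+theta)/(1-theta))).\<close>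
definition fth :: "real \<Rightarrow> ereal \<Rightarrow> real" where
  "fth \<theta> x = (case x of
       ereal y \<Rightarrow> ln ((cosh (y/2) + \<theta> * sinh (y/2)) / (cosh (y/2) - \<theta> * sinh (y/2)))
     | PInfty \<Rightarrow> ln ((1 + \<theta>) / (1 - \<theta>))
     | MInfty \<Rightarrow> - ln ((1 + \<theta>) / (1 - \<theta>)))"

end

theory Submission
  imports Defs
begin


lemma configs_finite: "finite L \<Longrightarrow> finite (configs L)"
  unfolding configs_def by (intro finite_PiE) auto

lemma adm_finite: "finite S \<Longrightarrow> finite (adm S B \<tau>)"
  unfolding adm_def by (rule finite_subset[OF _ configs_finite]) auto

lemma split_sum:
  fixes a c :: "('v \<Rightarrow> real) \<Rightarrow> real" and b :: "real \<Rightarrow> real \<Rightarrow> real"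
  assumes fin: "finite S" and DS: "D \<subseteq> S" and v: "v \<in> S" "v \<notin> D" and w: "w \<in> D"
    and la: "\<And>\<sigma> \<sigma>'. (\<forall>u\<in>S-D. \<sigma> u = \<sigma>' u) \<Longrightarrow> a \<sigma> = a \<sigma>'"
    and lc: "\<And>\<sigma> \<sigma>'. (\<forall>u\<in>D. \<sigma> u = \<sigma>' u) \<Longrightarrow> c \<sigma> = c \<sigma>'"
  shows "(\<Sum>\<sigma>\<in>adm S (B\<inter>S) \<tau>. a \<sigma> * b (\<sigma> v) (\<sigma> w) * c \<sigma>)
       = (\<Sum>\<sigma>\<in>adm (S-D) (B\<inter>(S-D)) \<tau>. a \<sigma> * (\<Sum>\<sigma>'\<in>adm D (B\<inter>D) \<tau>. b (\<sigma> v) (\<sigma>' w) * c \<sigma>'))"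
proof -
  have fA: "finite (adm (S-D) (B\<inter>(S-D)) \<tau>)" "finite (adm D (B\<inter>D) \<tau>)"
    using fin DS by (auto intro!: adm_finite intro: finite_subset)
  have "(\<Sum>\<sigma>\<in>adm (S-D) (B\<inter>(S-D)) \<tau>. a \<sigma> * (\<Sum>\<sigma>'\<in>adm D (B\<inter>D) \<tau>. b (\<sigma> v) (\<sigma>' w) * c \<sigma>'))
     = (\<Sum>\<sigma>\<in>adm (S-D) (B\<inter>(S-D)) \<tau>. \<Sum>\<sigma>'\<in>adm D (B\<inter>D) \<tau>. a \<sigma> * b (\<sigma> v) (\<sigma>' w) * c \<sigma>')"
    by (simp add: sum_distrib_left mult.assoc)
  also have "\<dots> = (\<Sum>p\<in>adm (S-D) (B\<inter>(S-D)) \<tau> \<times> adm D (B\<inter>D) \<tau>. a (fst p) * b (fst p v) (snd p w) * c (snd p))"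
    by (simp add: sum.cartesian_product case_prod_beta)
  also have "\<dots> = (\<Sum>\<sigma>\<in>adm S (B\<inter>S) \<tau>. a \<sigma> * b (\<sigma> v) (\<sigma> w) * c \<sigma>)"
    apply (rule sum.reindex_bij_witness[where j = "\<lambda>p u. if u \<in> D then snd p u else fst p u"
        and i = "\<lambda>\<sigma>. (restrict \<sigma> (S-D), restrict \<sigma> D)"])
    subgoal for p
      apply (cases p)
      apply (simp add: adm_def configs_def PiE_iff)
      apply (intro conjI ext)
      by (simp_all add: extensional_def restrict_def)
    subgoal for p using DS
      apply (cases p)
      apply (simp add: adm_def configs_def PiE_iff extensional_def)
      by blast
    subgoal for \<sigma>
      apply (rule ext)
      by (simp add: adm_def configs_def PiE_iff extensional_def restrict_def)
    subgoal for \<sigma> using DS by (simp add: adm_def configs_def PiE_iff) blast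
    subgoal for p
    proof -
      have "a (\<lambda>u. if u \<in> D then snd p u else fst p u) = a (fst p)" by (rule la) auto
      moreover have "c (\<lambda>u. if u \<in> D then snd p u else fst p u) = c (snd p)" by (rule lc) auto
      ultimately show ?thesis using v w by simp
    qed
    done
  finally show ?thesis by simp
qed

lemma energy_split:
  assumes fin: "finite S" and DS: "D \<subseteq> S" and v: "v \<in> S" "v \<notin> D" and w: "w \<in> D"
  shows "energy par S v \<sigma> = energy par (S - D) v \<sigma> + \<sigma> (par w) * \<sigma> w + energy par D w \<sigma>"
proof -
  have fD: "finite D" using fin DS by (rule finite_subset[rotated])
  have e: "S - {v} = ((S-D) - {v}) \<union> D" using DS v by auto
  have "energy par S v \<sigma> = (\<Sum>u\<in>(S-D)-{v}. \<sigma> (par u) * \<sigma> u) + (\<Sum>u\<in>D. \<sigma> (par u) * \<sigma> u)"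
    unfolding energy_def e using fin fD by (subst sum.union_disjoint) auto
  also have "(\<Sum>u\<in>D. \<sigma> (par u) * \<sigma> u) = \<sigma> (par w) * \<sigma> w + (\<Sum>u\<in>D-{w}. \<sigma> (par u) * \<sigma> u)"
    using fD w by (rule sum.remove)
  finally show ?thesis unfolding energy_def by simp
qed

lemma energy_local:
  "(\<forall>u\<in>X. \<sigma> u = \<sigma>' u) \<Longrightarrow> (\<forall>u\<in>X-{v}. par u \<in> X) \<Longrightarrow> energy par X v \<sigma> = energy par X v \<sigma>'"
  unfolding energy_def by (rule sum.cong) auto

lemma sum_pm:
  fixes X :: "('v \<Rightarrow> real) set"
  assumes "finite X" "\<And>\<sigma>. \<sigma>\<in>X \<Longrightarrow> \<sigma> w = 1 \<or> \<sigma> w = -1"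
  shows "(\<Sum>\<sigma>\<in>X. h (\<sigma> w) \<sigma>) = (\<Sum>\<sigma>\<in>{\<sigma>\<in>X. \<sigma> w = 1}. h 1 \<sigma>) + (\<Sum>\<sigma>\<in>{\<sigma>\<in>X. \<sigma> w = -1}. h (-1) \<sigma>)"
proof -
  have e: "X = {\<sigma>\<in>X. \<sigma> w = 1} \<union> {\<sigma>\<in>X. \<sigma> w = -1}" using assms(2) by auto
  have "(\<Sum>\<sigma>\<in>X. h (\<sigma> w) \<sigma>) = (\<Sum>\<sigma>\<in>{\<sigma>\<in>X. \<sigma> w = 1}. h (\<sigma> w) \<sigma>) + (\<Sum>\<sigma>\<in>{\<sigma>\<in>X. \<sigma> w = -1}. h (\<sigma> w) \<sigma>)"
    using assms(1) by (subst e, subst sum.union_disjoint) auto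
  also have "\<dots> = (\<Sum>\<sigma>\<in>{\<sigma>\<in>X. \<sigma> w = 1}. h 1 \<sigma>) + (\<Sum>\<sigma>\<in>{\<sigma>\<in>X. \<sigma> w = -1}. h (-1) \<sigma>)"
    by (intro arg_cong2[where f="(+)"] sum.cong) auto
  finally show ?thesis .
qed



definition ZG :: "real \<Rightarrow> ('v\<Rightarrow>'v) \<Rightarrow> 'v set \<Rightarrow> 'v \<Rightarrow> 'v set \<Rightarrow> ('v\<Rightarrow>real) \<Rightarrow> real \<Rightarrow> (('v\<Rightarrow>real)\<Rightarrow>real) \<Rightarrow> real" where
 "ZG \<beta> par X u B \<tau> t f = (\<Sum>\<sigma>\<in>{\<sigma>\<in>adm X (B\<inter>X) \<tau>. \<sigma> u = t}. exp (\<beta> * energy par X u \<sigma>) * f \<sigma>)"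

lemma ZG_if: "finite X \<Longrightarrow> ZG \<beta> par X u B \<tau> t f =
   (\<Sum>\<sigma>\<in>adm X (B\<inter>X) \<tau>. if \<sigma> u = t then exp (\<beta> * energy par X u \<sigma>) * f \<sigma> else 0)"
  unfolding ZG_def by (simp add: sum.inter_filter adm_finite)

lemma adm_val: "\<sigma> \<in> adm X B \<tau> \<Longrightarrow> u \<in> X \<Longrightarrow> \<sigma> u = 1 \<or> \<sigma> u = -1"
  by (auto simp: adm_def configs_def PiE_iff)

lemma ZG_split:
  fixes S D :: "'v set" and par :: "'v \<Rightarrow> 'v" and f :: "('v \<Rightarrow> real) \<Rightarrow> real"
  assumes fin: "finite S" and DS: "D \<subseteq> S" and v: "v \<in> S" "v \<notin> D" and w: "w \<in> D" and pw: "par w = v"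
    and clA: "\<forall>u\<in>(S-D)-{v}. par u \<in> S-D" and clD: "\<forall>u\<in>D-{w}. par u \<in> D"
    and lf: "\<And>\<sigma> \<sigma>'. (\<forall>u\<in>D. \<sigma> u = \<sigma>' u) \<Longrightarrow> f \<sigma> = f \<sigma>'"
  shows "ZG \<beta> par S v B \<tau> s f = ZG \<beta> par (S-D) v B \<tau> s (\<lambda>_. 1) *
     (exp (\<beta>*s) * ZG \<beta> par D w B \<tau> 1 f + exp (-(\<beta>*s)) * ZG \<beta> par D w B \<tau> (-1) f)"
proof -
  have fD: "finite D" using fin DS by (rule finite_subset[rotated])
  have fA: "finite (S-D)" using fin by simp
  define K where "K = (\<Sum>\<sigma>'\<in>adm D (B\<inter>D) \<tau>. exp (\<beta>*(s*\<sigma>' w)) * (exp (\<beta> * energy par D w \<sigma>') * f \<sigma>'))"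
  have "ZG \<beta> par S v B \<tau> s f = (\<Sum>\<sigma>\<in>adm S (B\<inter>S) \<tau>.
      (if \<sigma> v = s then exp (\<beta> * energy par (S-D) v \<sigma>) else 0) * (\<lambda>x y. exp (\<beta>*(x*y))) (\<sigma> v) (\<sigma> w)
       * (exp (\<beta> * energy par D w \<sigma>) * f \<sigma>))"
    unfolding ZG_if[OF fin]
    by (rule sum.cong[OF refl]) (simp add: energy_split[OF fin DS v w] pw distrib_left exp_add)
  also have "\<dots> = (\<Sum>\<sigma>\<in>adm (S-D) (B\<inter>(S-D)) \<tau>. (if \<sigma> v = s then exp (\<beta> * energy par (S-D) v \<sigma>) else 0) *
      (\<Sum>\<sigma>'\<in>adm D (B\<inter>D) \<tau>. (\<lambda>x y. exp (\<beta>*(x*y))) (\<sigma> v) (\<sigma>' w) * (exp (\<beta> * energy par D w \<sigma>') * f \<sigma>')))"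
  proof (rule split_sum[OF fin DS v w])
    fix \<sigma> \<sigma>' :: "'v \<Rightarrow> real" assume a: "\<forall>u\<in>S-D. \<sigma> u = \<sigma>' u"
    then have "energy par (S-D) v \<sigma> = energy par (S-D) v \<sigma>'" using clA by (rule energy_local)
    moreover have "\<sigma> v = \<sigma>' v" using a v by auto
    ultimately show "(if \<sigma> v = s then exp (\<beta> * energy par (S-D) v \<sigma>) else 0) =
          (if \<sigma>' v = s then exp (\<beta> * energy par (S-D) v \<sigma>') else 0)" by simp
  next
    fix \<sigma> \<sigma>' :: "'v \<Rightarrow> real" assume a: "\<forall>u\<in>D. \<sigma> u = \<sigma>' u"
    then have "energy par D w \<sigma> = energy par D w \<sigma>'" using clD by (rule energy_local)
    moreover have "f \<sigma> = f \<sigma>'" using a by (rule lf)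
    ultimately show "exp (\<beta> * energy par D w \<sigma>) * f \<sigma> = exp (\<beta> * energy par D w \<sigma>') * f \<sigma>'" by simp
  qed
  also have "\<dots> = (\<Sum>\<sigma>\<in>adm (S-D) (B\<inter>(S-D)) \<tau>. (if \<sigma> v = s then exp (\<beta> * energy par (S-D) v \<sigma>) else 0) * K)"
    unfolding K_def by (rule sum.cong[OF refl]) auto
  also have "\<dots> = ZG \<beta> par (S-D) v B \<tau> s (\<lambda>_. 1) * K"
    unfolding ZG_if[OF fA] sum_distrib_right by (rule sum.cong[OF refl]) simp
  also have "K = exp (\<beta>*s) * ZG \<beta> par D w B \<tau> 1 f + exp (-(\<beta>*s)) * ZG \<beta> par D w B \<tau> (-1) f"
  proof -
    have "K = (\<Sum>\<sigma>\<in>{\<sigma>\<in>adm D (B\<inter>D) \<tau>. \<sigma> w = 1}. exp (\<beta>*(s*1)) * (exp (\<beta> * energy par D w \<sigma>) * f \<sigma>))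
      + (\<Sum>\<sigma>\<in>{\<sigma>\<in>adm D (B\<inter>D) \<tau>. \<sigma> w = -1}. exp (\<beta>*(s*(-1))) * (exp (\<beta> * energy par D w \<sigma>) * f \<sigma>))"
      unfolding K_def
      apply (rule sum_pm[where h = "\<lambda>x \<sigma>'. exp (\<beta>*(s*x)) * (exp (\<beta> * energy par D w \<sigma>') * f \<sigma>')"])
       apply (rule adm_finite[OF fD])
      apply (erule adm_val[OF _ w])
      done
    then show ?thesis by (simp add: ZG_def sum_distrib_left)
  qed
  finally show ?thesis .
qed

lemma ZG_pos:
  assumes "finite S" "u \<in> S" "t = 1 \<or> t = -1" "\<forall>x\<in>B\<inter>S. \<tau> x = 1 \<or> \<tau> x = -1" "u \<in> B \<Longrightarrow> \<tau> u = t"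
  shows "0 < ZG \<beta> par S u B \<tau> t (\<lambda>_. 1)"
proof -
  let ?s = "\<lambda>x\<in>S. if x = u then t else if x \<in> B then \<tau> x else 1"
  have "?s \<in> {\<sigma>\<in>adm S (B\<inter>S) \<tau>. \<sigma> u = t}"
    using assms by (auto simp: adm_def configs_def PiE_iff)
  moreover have "finite (adm S (B\<inter>S) \<tau>)" by (rule adm_finite[OF assms(1)])
  ultimately show ?thesis unfolding ZG_def
    by (intro sum_pos) auto
qed

lemma ZG_nonneg: "0 \<le> ZG \<beta> par S u B \<tau> t (\<lambda>_. 1)"
  unfolding ZG_def by (intro sum_nonneg) auto

lemma total_ZG:
  assumes "finite S" "u \<in> S"
  shows "(\<Sum>\<sigma>\<in>adm S (B\<inter>S) \<tau>. exp (\<beta> * energy par S u \<sigma>)) = ZG \<beta> par S u B \<tau> 1 (\<lambda>_. 1) + ZG \<beta> par S u B \<tau> (-1) (\<lambda>_. 1)"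
proof -
  have "(\<Sum>\<sigma>\<in>adm S (B\<inter>S) \<tau>. exp (\<beta> * energy par S u \<sigma>)) =
     (\<Sum>\<sigma>\<in>{\<sigma>\<in>adm S (B\<inter>S) \<tau>. \<sigma> u = 1}. exp (\<beta> * energy par S u \<sigma>)) +
     (\<Sum>\<sigma>\<in>{\<sigma>\<in>adm S (B\<inter>S) \<tau>. \<sigma> u = -1}. exp (\<beta> * energy par S u \<sigma>))"
    apply (rule sum_pm[where h = "\<lambda>x \<sigma>. exp (\<beta> * energy par S u \<sigma>)"])
     apply (rule adm_finite[OF assms(1)])
    apply (erule adm_val[OF _ assms(2)])
    done
  then show ?thesis unfolding ZG_def by simp
qed

lemma gibbs_ZG:
  assumes "finite S" "u \<in> S"
  shows "gibbs_prob \<beta> par S u (B\<inter>S) \<tau> (\<lambda>\<sigma>. \<sigma> u = t) =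
     ZG \<beta> par S u B \<tau> t (\<lambda>_. 1) / (ZG \<beta> par S u B \<tau> 1 (\<lambda>_. 1) + ZG \<beta> par S u B \<tau> (-1) (\<lambda>_. 1))"
proof -
  have "B \<inter> S \<inter> S = B \<inter> S" by auto
  then show ?thesis unfolding gibbs_prob_def total_ZG[OF assms, symmetric] by (simp add: ZG_def)
qed

lemma fiber:
  fixes X :: "('v\<Rightarrow>real) set" and g :: "('v\<Rightarrow>real)\<Rightarrow>real" and h :: "('v\<Rightarrow>real)\<Rightarrow>real"
  assumes fX: "finite X" and fL: "finite L" and val: "\<forall>\<sigma>\<in>X. \<forall>u\<in>L. \<sigma> u = 1 \<or> \<sigma> u = -1"
  shows "(\<Sum>\<eta>\<in>configs L. (\<Sum>\<sigma>\<in>{\<sigma>\<in>X. (\<forall>u\<in>L. \<sigma> u = \<eta> u) \<and> P \<sigma>}. h \<sigma>) * g \<eta>)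
       = (\<Sum>\<sigma>\<in>{\<sigma>\<in>X. P \<sigma>}. h \<sigma> * g (restrict \<sigma> L))"
proof -
  have fXP: "finite {\<sigma>\<in>X. P \<sigma>}" using fX by simp
  have "(\<Sum>\<eta>\<in>configs L. (\<Sum>\<sigma>\<in>{\<sigma>\<in>X. (\<forall>u\<in>L. \<sigma> u = \<eta> u) \<and> P \<sigma>}. h \<sigma>) * g \<eta>)
      = (\<Sum>\<eta>\<in>configs L. \<Sum>\<sigma>\<in>{\<sigma>\<in>X. P \<sigma>}. if \<eta> = restrict \<sigma> L then h \<sigma> * g (restrict \<sigma> L) else 0)"
  proof (rule sum.cong[OF refl])
    fix \<eta> assume e: "\<eta> \<in> configs L"
    have "{\<sigma>\<in>X. (\<forall>u\<in>L. \<sigma> u = \<eta> u) \<and> P \<sigma>} = {\<sigma>\<in>{\<sigma>\<in>X. P \<sigma>}. \<eta> = restrict \<sigma> L}"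
      using e by (auto simp: configs_def PiE_iff extensional_def fun_eq_iff)
    then show "(\<Sum>\<sigma>\<in>{\<sigma>\<in>X. (\<forall>u\<in>L. \<sigma> u = \<eta> u) \<and> P \<sigma>}. h \<sigma>) * g \<eta> =
        (\<Sum>\<sigma>\<in>{\<sigma>\<in>X. P \<sigma>}. if \<eta> = restrict \<sigma> L then h \<sigma> * g (restrict \<sigma> L) else 0)"
      using fXP by (simp add: sum.inter_filter[symmetric] sum_distrib_right if_distrib cong: if_cong)
  qed
  also have "\<dots> = (\<Sum>\<sigma>\<in>{\<sigma>\<in>X. P \<sigma>}. \<Sum>\<eta>\<in>configs L. if \<eta> = restrict \<sigma> L then h \<sigma> * g (restrict \<sigma> L) else 0)"
    by (rule sum.swap)
  also have "\<dots> = (\<Sum>\<sigma>\<in>{\<sigma>\<in>X. P \<sigma>}. h \<sigma> * g (restrict \<sigma> L))"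
  proof (rule sum.cong[OF refl])
    fix \<sigma> assume "\<sigma> \<in> {\<sigma>\<in>X. P \<sigma>}"
    then have "restrict \<sigma> L \<in> configs L" using val by (auto simp: configs_def)
    then show "(\<Sum>\<eta>\<in>configs L. if \<eta> = restrict \<sigma> L then h \<sigma> * g (restrict \<sigma> L) else 0) = h \<sigma> * g (restrict \<sigma> L)"
      using configs_finite[OF fL] by (simp add: sum.delta)
  qed
  finally show ?thesis .
qed



lemma exp_half_sq: "exp (x/2) * exp (x/2) = exp (x::real)"
  by (simp flip: exp_add)

lemma A1:
  fixes a b \<beta> :: real
  assumes a: "a > 0" and b: "b > 0"
  shows "(cosh (ln (a/b)/2) + tanh \<beta> * sinh (ln (a/b)/2)) / (cosh (ln (a/b)/2) - tanh \<beta> * sinh (ln (a/b)/2))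
       = (exp \<beta> * a + exp (-\<beta>) * b) / (exp (-\<beta>) * a + exp \<beta> * b)"
proof -
  define y where "y = exp (ln (a/b)/2)"
  define e where "e = exp \<beta>"
  have y: "y > 0" "y * y = a / b" unfolding y_def using a b by (auto simp: exp_half_sq)
  have e: "e > 0" unfolding e_def by simp
  have ay: "a = b * (y*y)" using y b by (simp add: field_simps)
  have c: "cosh (ln (a/b)/2) = (y*y + 1)/(2*y)" unfolding y_def cosh_def using y(1) unfolding y_def
    by (simp add: exp_minus field_simps)
  have s: "sinh (ln (a/b)/2) = (y*y - 1)/(2*y)" unfolding y_def sinh_def using y(1) unfolding y_def
    by (simp add: exp_minus field_simps)
  have t: "tanh \<beta> = (e*e - 1)/(e*e + 1)" proof -
    have t0: "tanh \<beta> = (e - 1/e)/(e + 1/e)" unfolding e_def tanh_altdef by (simp add: exp_minus inverse_eq_divide)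
    have "e*e+1 \<noteq> 0" "e \<noteq> 0" using e by (smt (verit) mult_pos_pos)+
    moreover have "e - 1/e = (e*e-1)/e" "e + 1/e = (e*e+1)/e" using \<open>e \<noteq> 0\<close> by (simp_all add: field_simps)
    ultimately show ?thesis unfolding t0 by simp
  qed
  have p: "e*e>0" "y*y>0" "e*e*y*y>0" using y(1) e by simp_all
  have nz: "e*e+1 \<noteq> 0" "y \<noteq> 0" "e \<noteq> 0" "y*y + e*e \<noteq> 0" "e*e*y*y + 1 \<noteq> 0" "b \<noteq> 0"
    using y(1) e b p by linarith+
  have q: "0 < b*(y*y)" "0 < e*b*e" "0 < e*(b*(y*y))*e" using y(1) e b by simp_all
  have pos: "0 < e*e+1" "0 < y" "0 < e" "0 < y*y + e*e" "0 < e*e*y*y + 1" "0 < b" "0 < b*(y*y) + e*b*e"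
    "0 < e*(b*(y*y))*e + b"
    using y(1) e b p q by linarith+
  have N: "(y*y + 1)/(2*y) + (e*e - 1)/(e*e + 1) * ((y*y - 1)/(2*y)) = (e*e*y*y+1)/(y*(e*e+1))"
    using pos nz by (simp add: divide_simps) algebra
  have D: "(y*y + 1)/(2*y) - (e*e - 1)/(e*e + 1) * ((y*y - 1)/(2*y)) = (y*y+e*e)/(y*(e*e+1))"
    using pos nz by (simp add: divide_simps) algebra
  have "(e*e*y*y+1)/(y*(e*e+1)) / ((y*y+e*e)/(y*(e*e+1))) = (e * a + (1/e) * b) / ((1/e) * a + e * b)"
    using pos nz unfolding ay by (simp add: divide_simps) algebra
  moreover have em: "exp (-\<beta>) = 1/e" unfolding e_def by (simp add: exp_minus inverse_eq_divide)
  moreover have ee: "exp \<beta> = e" unfolding e_def ..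
  ultimately show ?thesis unfolding c s t N D by simp
qed

lemma A2: "ln ((1 + tanh \<beta>) / (1 - tanh (\<beta>::real))) = 2 * \<beta>"
proof -
  have "(1 + tanh \<beta>) / (1 - tanh \<beta>) = exp (2*\<beta>)"
  proof -
    define e where "e = exp \<beta>"
    have e: "e > 0" unfolding e_def by simp
    have t: "tanh \<beta> = (e*e - 1)/(e*e + 1)" proof -
    have t0: "tanh \<beta> = (e - 1/e)/(e + 1/e)" unfolding e_def tanh_altdef by (simp add: exp_minus inverse_eq_divide)
    have "e*e+1 \<noteq> 0" "e \<noteq> 0" using e by (smt (verit) mult_pos_pos)+
    moreover have "e - 1/e = (e*e-1)/e" "e + 1/e = (e*e+1)/e" using \<open>e \<noteq> 0\<close> by (simp_all add: field_simps)
    ultimately show ?thesis unfolding t0 by simp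
  qed
    have nz: "e*e+1 \<noteq> 0" using e by (smt (verit) mult_pos_pos)
    have x: "exp (2*\<beta>) = e * e" unfolding e_def by (simp flip: exp_add)
    show ?thesis unfolding t x using nz by (simp add: field_simps)
  qed
  then show ?thesis by simp
qed

lemma A3:
  fixes a b \<beta> G1 G2 :: real
  assumes a: "a > 0" and b: "b > 0"
  shows "(exp \<beta> * a * G1 + exp (-\<beta>) * b * G2) / (exp \<beta> * a + exp (-\<beta>) * b)
       - (exp (-\<beta>) * a * G1 + exp \<beta> * b * G2) / (exp (-\<beta>) * a + exp \<beta> * b)
     = tanh \<beta> * ((cosh \<beta>)\<^sup>2 / ((cosh \<beta>)\<^sup>2 + (cosh (ln (a/b) / 2))\<^sup>2 - 1)) * (G1 - G2)"
proof -
  define y where "y = exp (ln (a/b)/2)"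
  define e where "e = exp \<beta>"
  have y: "y > 0" "y * y = a / b" unfolding y_def using a b by (auto simp: exp_half_sq)
  have e: "e > 0" unfolding e_def by simp
  have ay: "a = b * (y*y)" using y b by (simp add: field_simps)
  have c: "cosh (ln (a/b)/2) = (y*y + 1)/(2*y)" unfolding y_def cosh_def using y(1) unfolding y_def
    by (simp add: exp_minus field_simps)
  have t: "tanh \<beta> = (e*e - 1)/(e*e + 1)" proof -
    have t0: "tanh \<beta> = (e - 1/e)/(e + 1/e)" unfolding e_def tanh_altdef by (simp add: exp_minus inverse_eq_divide)
    have "e*e+1 \<noteq> 0" "e \<noteq> 0" using e by (smt (verit) mult_pos_pos)+
    moreover have "e - 1/e = (e*e-1)/e" "e + 1/e = (e*e+1)/e" using \<open>e \<noteq> 0\<close> by (simp_all add: field_simps)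
    ultimately show ?thesis unfolding t0 by simp
  qed
  have cb: "cosh \<beta> = (e*e + 1)/(2*e)" unfolding e_def cosh_def using e unfolding e_def
    by (simp add: exp_minus field_simps)
  have em: "exp (-\<beta>) = 1/e" unfolding e_def by (simp add: exp_minus inverse_eq_divide)
  have ee: "exp \<beta> = e" unfolding e_def ..
  have p: "e*e>0" "y*y>0" "e*e*y*y>0" "e*e*e*e > 0" using y(1) e by simp_all
  have q: "0 < b*(y*y)" "0 < e*b*e" "0 < e*(b*(y*y))*e" using y(1) e b by simp_all
  have pos: "0 < e*e*y*y + 1" "0 < y*y + e*e" "0 < e*e + 1" "0 < e*e*y*y + e*e*e*e + y*y + 1" "0 < e" "0 < y" "0 < b"
    "0 < b*(y*y) + e*b*e" "0 < e*(b*(y*y))*e + b"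
    using p e y(1) b q by linarith+
  have nz: "e \<noteq> 0" "y \<noteq> 0" "b \<noteq> 0" "e*e*y*y + 1 \<noteq> 0" "y*y + e*e \<noteq> 0" "e*e + 1 \<noteq> 0"
     "e*e*y*y + e*e*e*e + y*y + 1 \<noteq> 0"
    using e y b pos by auto
  have L: "(e * a * G1 + (1/e) * b * G2) / (e * a + (1/e) * b)
       - ((1/e) * a * G1 + e * b * G2) / ((1/e) * a + e * b)
      = (e*e*e*e - 1) * y*y * (G1 - G2) / ((e*e*y*y + 1) * (y*y + e*e))"
    using nz pos unfolding ay by (simp add: divide_simps) algebra
  have R: "((e*e + 1)/(2*e))\<^sup>2 / (((e*e + 1)/(2*e))\<^sup>2 + ((y*y + 1)/(2*y))\<^sup>2 - 1)
     = (e*e+1)*(e*e+1)*y*y / ((e*e*y*y + 1) * (y*y + e*e))"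
  proof -
    have "((e*e + 1)/(2*e))\<^sup>2 + ((y*y + 1)/(2*y))\<^sup>2 - 1 = (e*e*y*y + 1) * (y*y + e*e) / (4*e*e*y*y)"
      using nz pos by (simp add: divide_simps power2_eq_square) algebra
    then show ?thesis using nz pos by (simp add: divide_simps power2_eq_square)
  qed
  have "(e*e - 1)/(e*e + 1) * ((e*e+1)*(e*e+1)*y*y / ((e*e*y*y + 1) * (y*y + e*e))) * (G1 - G2)
      = (e*e*e*e - 1) * y*y * (G1 - G2) / ((e*e*y*y + 1) * (y*y + e*e))"
    using nz pos by (simp add: divide_simps) (simp add: algebra_simps) 
  then show ?thesis unfolding c t cb em ee R[symmetric] L[symmetric] by (rule sym)
qed



lemma par_in: "rooted_tree V r par \<Longrightarrow> x \<in> V \<Longrightarrow> par x \<in> V"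
  unfolding rooted_tree_def by (cases "x = r") auto

lemma funpow_in: "rooted_tree V r par \<Longrightarrow> x \<in> V \<Longrightarrow> (par ^^ n) x \<in> V"
  by (induction n) (auto intro: par_in)

lemma funpow_root: "par r = r \<Longrightarrow> (par ^^ n) r = r"
  by (induction n) auto

lemma funpow_mult_fix: "(f ^^ p) w = w \<Longrightarrow> (f ^^ (p*k)) w = w"
proof (induction k)
  case (Suc k)
  have "(f ^^ (p * Suc k)) w = (f ^^ p) ((f ^^ (p*k)) w)" by (simp add: funpow_add)
  then show ?case using Suc by simp
qed simp

lemma no_cycle:
  assumes tree: "rooted_tree V r par" and w: "w \<in> V" and c: "(par ^^ Suc n) w = w"
  shows "w = r"
proof -
  obtain m where m: "(par ^^ m) w = r" using tree w unfolding rooted_tree_def by blast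
  have pr: "par r = r" using tree unfolding rooted_tree_def by blast
  have "(par ^^ (Suc n * m)) w = w" using c by (rule funpow_mult_fix)
  moreover have "Suc n * m = (Suc n * m - m) + m" by simp
  ultimately have "w = (par ^^ (Suc n * m - m)) ((par ^^ m) w)"
    by (metis funpow_add comp_apply)
  also have "\<dots> = r" using m funpow_root[of par r n for n, OF pr] by simp
  finally show ?thesis .
qed

lemma subtree_self: "v \<in> V \<Longrightarrow> v \<in> subtree V par v"
  unfolding subtree_def by (auto intro: exI[of _ 0])

lemma subtree_sub: "subtree V par v \<subseteq> V"
  unfolding subtree_def by auto

lemma subtree_mono: "par w = v \<Longrightarrow> subtree V par w \<subseteq> subtree V par v"
proof
  fix u assume "par w = v" "u \<in> subtree V par w"
  then obtain n where "u \<in> V" "(par ^^ n) u = w" unfolding subtree_def by auto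
  then have "(par ^^ Suc n) u = v" using \<open>par w = v\<close> by simp
  then show "u \<in> subtree V par v" using \<open>u \<in> V\<close> unfolding subtree_def by blast
qed

lemma subtree_par: "u \<in> V \<Longrightarrow> par u \<in> subtree V par w \<Longrightarrow> u \<in> subtree V par w"
proof -
  assume "u \<in> V" "par u \<in> subtree V par w"
  then obtain n where "(par ^^ n) (par u) = w" unfolding subtree_def by auto
  then have "(par ^^ Suc n) u = w" by (simp add: funpow_Suc_right del: funpow.simps)
  then show ?thesis using \<open>u \<in> V\<close> unfolding subtree_def by blast
qed

lemma not_in_child_subtree:
  assumes tree: "rooted_tree V r par" and w: "w \<in> V" "w \<noteq> r" "par w = v"
  shows "v \<notin> subtree V par w"
proof
  assume "v \<in> subtree V par w"
  then obtain n where "(par ^^ n) v = w" unfolding subtree_def by auto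
  then have "(par ^^ Suc n) w = w" using w by (simp add: funpow_Suc_right del: funpow.simps)
  then show False using no_cycle[OF tree w(1)] w by blast
qed

lemma subtree_cl:
  assumes tree: "rooted_tree V r par" and u: "u \<in> subtree V par v" "u \<noteq> v"
  shows "par u \<in> subtree V par v"
proof -
  obtain n where n: "u \<in> V" "(par ^^ n) u = v" using u unfolding subtree_def by auto
  then obtain k where k: "n = Suc k" using u(2) by (cases n) auto
  have "(par ^^ k) (par u) = v" using n k by (simp add: funpow_Suc_right del: funpow.simps)
  then show ?thesis using par_in[OF tree n(1)] unfolding subtree_def by blast
qed

lemma disj_aux:
  assumes tree: "rooted_tree V r par" and w1: "w1 \<in> V" "w1 \<noteq> r" "par w1 = v"
    and w2: "w2 \<in> V" "w2 \<noteq> r" "par w2 = v" and ne: "w1 \<noteq> w2"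
    and n: "(par ^^ n) u = w1" and m: "(par ^^ m) u = w2" and le: "n \<le> m"
  shows False
proof -
  obtain d where d: "m = d + n" using le by (metis add.commute le_add_diff_inverse)
  have "(par ^^ d) w1 = w2" using n m d by (simp add: funpow_add)
  then obtain d' where d': "d = Suc d'" using ne by (cases d) auto
  have "(par ^^ d') v = w2" using \<open>(par ^^ d) w1 = w2\<close> d' w1
    by (simp add: funpow_Suc_right del: funpow.simps)
  then have "v \<in> subtree V par w2" using par_in[OF tree w1(1)] w1 unfolding subtree_def by blast
  then show False using not_in_child_subtree[OF tree w2] by blast
qed

lemma children_disjoint:
  assumes tree: "rooted_tree V r par" and w1: "w1 \<in> V" "w1 \<noteq> r" "par w1 = v"
    and w2: "w2 \<in> V" "w2 \<noteq> r" "par w2 = v" and ne: "w1 \<noteq> w2"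
  shows "subtree V par w1 \<inter> subtree V par w2 = {}"
proof (rule ccontr)
  assume "subtree V par w1 \<inter> subtree V par w2 \<noteq> {}"
  then obtain u n m where n: "(par ^^ n) u = w1" and m: "(par ^^ m) u = w2"
    unfolding subtree_def by auto
  show False
  proof (cases "n \<le> m")
    case True then show ?thesis using disj_aux[OF tree w1 w2 ne n m] by blast
  next
    case False then show ?thesis using disj_aux[OF tree w2 w1 _ m n] ne by force
  qed
qed

lemma closed_funpow:
  assumes "\<forall>x\<in>H. par x \<in> H" "u \<in> H" shows "(par ^^ k) u \<in> H"
  using assms by (induction k) auto

lemma child_decomp:
  assumes tree: "rooted_tree V r par" and u: "u \<in> subtree V par v" "u \<noteq> v"
  shows "\<exists>k. par ((par ^^ k) u) = v \<and> (par ^^ k) u \<noteq> r \<and> (par ^^ k) u \<noteq> v"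
proof -
  have ex: "\<exists>n. (par ^^ n) u = v" using u unfolding subtree_def by auto
  obtain n where n: "(par ^^ n) u = v" "\<forall>m<n. (par ^^ m) u \<noteq> v"
    using ex exists_least_iff[of "\<lambda>n. (par ^^ n) u = v"] by blast
  then obtain k where k: "n = Suc k" using u(2) by (cases n) auto
  have pk: "par ((par ^^ k) u) = v" using n(1) k by simp
  have nv: "(par ^^ k) u \<noteq> v" using n(2) k by simp
  have pr: "par r = r" using tree unfolding rooted_tree_def by blast
  have "(par ^^ k) u \<noteq> r" using pk nv pr by auto
  then show ?thesis using pk nv by blast
qed



lemma H_facts:
  assumes tree: "rooted_tree V r par" and hat: "root_subtree V r par H"
  shows "H \<subseteq> V" "\<forall>x\<in>H. par x \<in> H" "\<forall>x\<in>H. x \<notin> leaves V r par" "finite V" "leaves H r par \<subseteq> H"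
    "finite H"
proof -
  show "H \<subseteq> V" "\<forall>x\<in>H. x \<notin> leaves V r par" using hat unfolding root_subtree_def by auto
  show "\<forall>x\<in>H. par x \<in> H" using hat tree unfolding root_subtree_def rooted_tree_def by force
  show "finite V" using tree unfolding rooted_tree_def by blast
  show "leaves H r par \<subseteq> H" unfolding leaves_def by auto
  show "finite H" using \<open>H \<subseteq> V\<close> \<open>finite V\<close> by (rule finite_subset)
qed

lemma ZG_single:
  assumes "v \<notin> B" "s = 1 \<or> s = -1"
  shows "ZG \<beta> par {v} v B \<eta> s (\<lambda>_. 1) = 1"
proof -
  have "{\<sigma>\<in>adm {v} (B\<inter>{v}) \<eta>. \<sigma> v = s} = {\<lambda>x\<in>{v}. s}"
    using assms by (auto simp: adm_def configs_def PiE_iff extensional_def fun_eq_iff)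
  moreover have "energy par {v} v \<sigma> = 0" for \<sigma> unfolding energy_def by simp
  ultimately show ?thesis unfolding ZG_def by simp
qed

lemma muhat_ZG:
  assumes tree: "rooted_tree V r par" and hat: "root_subtree V r par H" and x: "x \<in> H"
  shows "muhat V r par H \<beta> \<eta> x (\<lambda>\<sigma>. \<sigma> x = t) =
    ZG \<beta> par (subtree V par x \<inter> H) x (leaves H r par) \<eta> t (\<lambda>_. 1) /
    (ZG \<beta> par (subtree V par x \<inter> H) x (leaves H r par) \<eta> 1 (\<lambda>_. 1) + ZG \<beta> par (subtree V par x \<inter> H) x (leaves H r par) \<eta> (-1) (\<lambda>_. 1))"
proof -
  note HF = H_facts[OF tree hat]
  have e: "leaves H r par \<inter> subtree V par x = leaves H r par \<inter> (subtree V par x \<inter> H)" using HF by auto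
  have fin: "finite (subtree V par x \<inter> H)" using HF by auto
  have xin: "x \<in> subtree V par x \<inter> H" using x HF by (auto intro: subtree_self)
  show ?thesis unfolding muhat_def e by (rule gibbs_ZG[OF fin xin])
qed

lemma mu_ZG:
  assumes tree: "rooted_tree V r par" and x: "x \<in> V"
  shows "mu V r par \<beta> \<tau> x (\<lambda>\<sigma>. \<sigma> x = t) =
    ZG \<beta> par (subtree V par x) x (leaves V r par) \<tau> t (\<lambda>_. 1) /
    (ZG \<beta> par (subtree V par x) x (leaves V r par) \<tau> 1 (\<lambda>_. 1) + ZG \<beta> par (subtree V par x) x (leaves V r par) \<tau> (-1) (\<lambda>_. 1))"
proof -
  have fin: "finite (subtree V par x)" using tree subtree_sub unfolding rooted_tree_def by (metis finite_subset)
  have xin: "x \<in> subtree V par x" using x by (rule subtree_self)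
  show ?thesis unfolding mu_def by (rule gibbs_ZG[OF fin xin])
qed

lemma ratio_ln:
  fixes p q :: real assumes "p > 0" "q > 0"
  shows "ln ((p / (p + q)) / (q / (p + q))) = ln (p / q)"
  using assms by simp

lemma ln_ratio1: "z > 0 \<Longrightarrow> ln ((exp a * z + exp b * 0) / (exp c * z + exp d * 0)) = a - (c::real)"
  by (simp add: exp_diff[symmetric])

lemma ln_ratio2: "z > 0 \<Longrightarrow> ln ((exp a * 0 + exp b * z) / (exp c * 0 + exp d * z)) = b - (d::real)"
  by (simp add: exp_diff[symmetric])

lemma xhat_rec:
  assumes tree: "rooted_tree V r par" and hat: "root_subtree V r par H"
    and v: "v \<in> H" "v \<notin> leaves H r par"
    and eta: "\<eta> \<in> configs (hleaves V r par H v)"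
  shows "xhat_real V r par H \<beta> \<eta> v = (\<Sum>w\<in>children H r par v. fth (tanh \<beta>) (xhat V r par H \<beta> \<eta> w))"
proof -
  note HF = H_facts[OF tree hat]
  define S where "S = subtree V par v \<inter> H"
  define LH where "LH = leaves H r par"
  define ch where "ch = children H r par v"
  define Dw where "Dw w = subtree V par w \<inter> H" for w
  define K where "K w s = exp (\<beta>*s) * ZG \<beta> par (Dw w) w LH \<eta> 1 (\<lambda>_. 1) + exp (-(\<beta>*s)) * ZG \<beta> par (Dw w) w LH \<eta> (-1) (\<lambda>_. 1)" for w s
  have finS: "finite S" unfolding S_def using HF by auto
  have vS: "v \<in> S" unfolding S_def using v HF by (auto intro: subtree_self)
  have vV: "v \<in> V" using v HF by auto
  have chp: "w \<in> H" "w \<in> V" "w \<noteq> r" "par w = v" if "w \<in> ch" for w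
    using that HF unfolding ch_def children_def by auto
  have finch: "finite ch" unfolding ch_def children_def using HF by auto
  have etav: "\<forall>u\<in>LH \<inter> subtree V par v. \<eta> u = 1 \<or> \<eta> u = -1"
    using eta unfolding configs_def hleaves_def LH_def by (auto simp: PiE_iff)
  have vLH: "v \<notin> LH" using v unfolding LH_def by simp
  have DwS: "Dw w \<subseteq> S" if "w \<in> ch" for w
    unfolding Dw_def S_def using subtree_mono[where par=par and w=w and v=v and V=V, OF chp(4)[OF that]] by auto
  have vDw: "v \<notin> Dw w" if "w \<in> ch" for w
    unfolding Dw_def using not_in_child_subtree[OF tree chp(2-4)[OF that]] by auto
  have wDw: "w \<in> Dw w" if "w \<in> ch" for w
    unfolding Dw_def using chp[OF that] by (auto intro: subtree_self)
  have finD: "finite (Dw w)" if "w \<in> ch" for w using finite_subset[OF DwS[OF that] finS] .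
  have clD: "\<forall>u\<in>Dw w - {w}. par u \<in> Dw w" if "w \<in> ch" for w
    unfolding Dw_def using subtree_cl[OF tree] HF(2) by blast
  have ind: "ZG \<beta> par S v LH \<eta> s (\<lambda>_. 1) = ZG \<beta> par (S - \<Union>(Dw ` C)) v LH \<eta> s (\<lambda>_. 1) * (\<Prod>w\<in>C. K w s)"
    if "finite C" "C \<subseteq> ch" for C s
    using that
  proof (induction C rule: finite_induct)
    case empty then show ?case by simp
  next
    case (insert w C)
    let ?A = "S - \<Union>(Dw ` C)"
    have wch: "w \<in> ch" using insert by auto
    have DwA: "Dw w \<subseteq> ?A"
    proof -
      have "Dw w \<inter> Dw w' = {}" if "w' \<in> C" for w'
      proof -
        have "w' \<in> ch" "w' \<noteq> w" using that insert by auto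
        then show ?thesis unfolding Dw_def
          using children_disjoint[OF tree chp(2-4)[OF wch] chp(2-4)[OF \<open>w' \<in> ch\<close>]] by auto
      qed
      then show ?thesis using DwS[OF wch] by auto
    qed
    have vA: "v \<in> ?A" using vS vDw insert by auto
    have clA: "\<forall>u\<in>(?A - Dw w) - {v}. par u \<in> ?A - Dw w"
    proof
      fix u assume u: "u \<in> (?A - Dw w) - {v}"
      then have uS: "u \<in> subtree V par v" "u \<in> H" "u \<noteq> v" "u \<in> V" unfolding S_def using HF by auto
      have p1: "par u \<in> S" unfolding S_def using subtree_cl[OF tree uS(1,3)] HF(2) uS(2) by auto
      have "par u \<notin> Dw w''" if "w'' \<in> insert w C" for w''
      proof
        assume "par u \<in> Dw w''"
        then have "u \<in> Dw w''" unfolding Dw_def using subtree_par[OF uS(4)] uS(2) by auto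
        then show False using u that by auto
      qed
      then show "par u \<in> ?A - Dw w" using p1 by auto
    qed
    have fA: "finite ?A" using finS by auto
    have split: "ZG \<beta> par ?A v LH \<eta> s (\<lambda>_. 1) = ZG \<beta> par (?A - Dw w) v LH \<eta> s (\<lambda>_. 1) * K w s"
      unfolding K_def
      by (rule ZG_split[OF fA DwA vA vDw[OF wch] wDw[OF wch] chp(4)[OF wch] clA clD[OF wch]]) simp
    have eq: "?A - Dw w = S - \<Union>(Dw ` insert w C)" by auto
    show ?case using insert.IH insert.prems insert.hyps split eq by (simp add: mult.assoc)
  qed
  have Sv: "S - \<Union>(Dw ` ch) = {v}"
  proof
    show "{v} \<subseteq> S - \<Union>(Dw ` ch)" using vS vDw by auto
    show "S - \<Union>(Dw ` ch) \<subseteq> {v}"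
    proof
      fix u assume u: "u \<in> S - \<Union>(Dw ` ch)"
      show "u \<in> {v}"
      proof (rule ccontr)
        assume "u \<notin> {v}"
        then have uu: "u \<in> subtree V par v" "u \<noteq> v" "u \<in> H" "u \<in> V" using u HF unfolding S_def by auto
        obtain k where k: "par ((par ^^ k) u) = v" "(par ^^ k) u \<noteq> r" using child_decomp[OF tree uu(1,2)] by blast
        have "(par ^^ k) u \<in> H" using closed_funpow[OF HF(2) uu(3)] .
        then have "(par ^^ k) u \<in> ch" unfolding ch_def children_def using k by auto
        moreover have "u \<in> Dw ((par ^^ k) u)" unfolding Dw_def subtree_def using uu by auto
        ultimately show False using u by auto
      qed
    qed
  qed
  have prodf: "ZG \<beta> par S v LH \<eta> s (\<lambda>_. 1) = (\<Prod>w\<in>ch. K w s)" if "s = 1 \<or> s = -1" for s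
    using ind[OF finch order_refl, of s] Sv ZG_single[OF vLH that] by simp
  have child: "K w 1 > 0 \<and> K w (-1) > 0 \<and> fth (tanh \<beta>) (xhat V r par H \<beta> \<eta> w) = ln (K w 1 / K w (-1))"
    if wch: "w \<in> ch" for w
  proof -
    define z where "z t = ZG \<beta> par (Dw w) w LH \<eta> t (\<lambda>_. 1)" for t
    have etaD: "\<forall>x\<in>LH \<inter> Dw w. \<eta> x = 1 \<or> \<eta> x = -1" using etav DwS[OF wch] unfolding S_def by auto
    have Kz: "K w 1 = exp \<beta> * z 1 + exp (-\<beta>) * z (-1)" "K w (-1) = exp (-\<beta>) * z 1 + exp \<beta> * z (-1)"
      unfolding K_def z_def by simp_all
    show ?thesis
    proof (cases "w \<in> LH")
      case True
      then have wL: "w \<in> LH \<inter> Dw w" using wDw[OF wch] by auto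
      have zpos: "z (\<eta> w) > 0" unfolding z_def
        by (rule ZG_pos[OF finD[OF wch] wDw[OF wch]]) (use etaD wL in auto)
      have zero: "z t = 0" if "t \<noteq> \<eta> w" for t
      proof -
        have e: "{\<sigma>\<in>adm (Dw w) (LH \<inter> Dw w) \<eta>. \<sigma> w = t} = {}" using wL that unfolding adm_def by auto
        show ?thesis unfolding z_def ZG_def e by simp
      qed
      have th2: "ln ((1 + tanh \<beta>) / (1 - tanh \<beta>)) = 2 * \<beta>" by (rule A2)
      consider "\<eta> w = 1" | "\<eta> w = -1" using etaD wL by blast
      then show ?thesis
      proof cases
        case 1
        have z0: "z (-1) = 0" using zero 1 by simp
        have "xhat V r par H \<beta> \<eta> w = \<infinity>" unfolding xhat_def using True 1 LH_def by simp
        moreover have "ln (K w 1 / K w (-1)) = 2 * \<beta>" unfolding Kz z0 using ln_ratio1[of "z 1" \<beta> "-\<beta>" "-\<beta>" \<beta>] zpos 1 by simp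
        ultimately show ?thesis unfolding Kz z0 using zpos 1 th2 by (simp add: fth_def)
      next
        case 2
        have z0: "z 1 = 0" using zero 2 by simp
        have "xhat V r par H \<beta> \<eta> w = -\<infinity>" unfolding xhat_def using True 2 LH_def by simp
        moreover have "ln (K w 1 / K w (-1)) = - (2 * \<beta>)" unfolding Kz z0 using ln_ratio2[of "z (-1)" \<beta> "-\<beta>" "-\<beta>" \<beta>] zpos 2 by simp
        ultimately show ?thesis unfolding Kz z0 using zpos 2 th2 by (simp add: fth_def)
      qed
    next
      case False
      have zp: "z 1 > 0" "z (-1) > 0" unfolding z_def
        by (rule ZG_pos[OF finD[OF wch] wDw[OF wch]]; use etaD False in auto)+
      have "xhat_real V r par H \<beta> \<eta> w = ln (z 1 / z (-1))"
        unfolding xhat_real_def muhat_ZG[OF tree hat chp(1)[OF wch]] z_def[symmetric] Dw_def[symmetric] LH_def[symmetric]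
        using zp by simp
      then have "xhat V r par H \<beta> \<eta> w = ereal (ln (z 1 / z (-1)))" unfolding xhat_def using False LH_def by simp
      then show ?thesis unfolding Kz using zp A1[OF zp, of \<beta>] by (simp add: fth_def add_pos_pos)
    qed
  qed
  have P1: "(\<Prod>w\<in>ch. K w 1) > 0" "(\<Prod>w\<in>ch. K w (-1)) > 0" using child by (auto intro: prod_pos)
  have "xhat_real V r par H \<beta> \<eta> v = ln ((\<Prod>w\<in>ch. K w 1) / (\<Prod>w\<in>ch. K w (-1)))"
    unfolding xhat_real_def muhat_ZG[OF tree hat v(1)] S_def[symmetric] LH_def[symmetric]
      prodf[of 1, simplified] prodf[of "-1", simplified]
    using P1 by simp
  also have "\<dots> = ln (\<Prod>w\<in>ch. K w 1 / K w (-1))" by (simp add: prod_dividef)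
  also have "\<dots> = (\<Sum>w\<in>ch. ln (K w 1 / K w (-1)))"
  proof (rule ln_prod[OF finch])
    fix w assume "w \<in> ch"
    then have "0 < K w 1" "0 < K w (-1)" using child by auto
    then show "K w 1 / K w (-1) \<noteq> 0" by simp
  qed
  also have "\<dots> = (\<Sum>w\<in>ch. fth (tanh \<beta>) (xhat V r par H \<beta> \<eta> w))"
    using child by (auto intro: sum.cong)
  finally show ?thesis unfolding ch_def .
qed



lemma Q_sum:
  assumes tree: "rooted_tree V r par" and hat: "root_subtree V r par H" and x: "x \<in> H"
    and tau: "\<forall>u\<in>leaves V r par. \<tau> u \<in> {-1, 1}" and s: "s = 1 \<or> s = -1"
  shows "(\<Sum>\<eta>\<in>configs (hleaves V r par H x). Q V r par H \<beta> \<tau> s x \<eta> * g \<eta>) =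
    ZG \<beta> par (subtree V par x) x (leaves V r par) \<tau> s (\<lambda>\<sigma>. g (restrict \<sigma> (hleaves V r par H x))) /
    ZG \<beta> par (subtree V par x) x (leaves V r par) \<tau> s (\<lambda>_. 1)"
proof -
  note HF = H_facts[OF tree hat]
  define ST where "ST = subtree V par x"
  define LV where "LV = leaves V r par"
  define Lx where "Lx = hleaves V r par H x"
  define X where "X = adm ST (LV \<inter> ST) \<tau>"
  define W where "W \<sigma> = exp (\<beta> * energy par ST x \<sigma>)" for \<sigma>
  define N where "N \<eta> = (\<Sum>\<sigma>\<in>{\<sigma>\<in>X. (\<forall>u\<in>Lx. \<sigma> u = \<eta> u) \<and> \<sigma> x = s}. W \<sigma>)" for \<eta>
  have xV: "x \<in> V" using x HF by auto
  have finST: "finite ST" unfolding ST_def using HF subtree_sub by (metis finite_subset)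
  have xST: "x \<in> ST" unfolding ST_def using xV by (rule subtree_self)
  have xLV: "x \<notin> LV" unfolding LV_def using x HF by auto
  have tauS: "\<forall>u\<in>LV \<inter> ST. \<tau> u = 1 \<or> \<tau> u = -1" using tau unfolding LV_def by auto
  have Zp: "ZG \<beta> par ST x LV \<tau> t (\<lambda>_. 1) > 0" if "t = 1 \<or> t = -1" for t
    by (rule ZG_pos[OF finST xST that tauS]) (use xLV in simp)
  have tot: "(\<Sum>\<sigma>\<in>X. W \<sigma>) > 0" unfolding X_def W_def total_ZG[OF finST xST]
    using Zp[of 1] Zp[of "-1"] by simp
  have Zs: "(\<Sum>\<sigma>\<in>{\<sigma>\<in>X. \<sigma> x = s}. W \<sigma>) = ZG \<beta> par ST x LV \<tau> s (\<lambda>_. 1)"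
    unfolding ZG_def X_def W_def by simp
  have Qe: "Q V r par H \<beta> \<tau> s x \<eta> = N \<eta> / ZG \<beta> par ST x LV \<tau> s (\<lambda>_. 1)" for \<eta>
  proof -
    have "Q V r par H \<beta> \<tau> s x \<eta> = (N \<eta> / (\<Sum>\<sigma>\<in>X. W \<sigma>)) / ((\<Sum>\<sigma>\<in>{\<sigma>\<in>X. \<sigma> x = s}. W \<sigma>) / (\<Sum>\<sigma>\<in>X. W \<sigma>))"
      unfolding Q_def mu_def gibbs_prob_def N_def X_def W_def ST_def LV_def Lx_def by simp
    then show ?thesis using tot unfolding Zs by simp
  qed
  have val: "\<forall>\<sigma>\<in>X. \<forall>u\<in>Lx. \<sigma> u = 1 \<or> \<sigma> u = -1"
    unfolding X_def Lx_def hleaves_def ST_def by (auto simp: adm_def configs_def PiE_iff)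
  have "finite (leaves H r par)" using HF(5,6) by (rule finite_subset)
  then have finLx: "finite Lx" unfolding Lx_def hleaves_def by simp
  have finX: "finite X" unfolding X_def using finST by (rule adm_finite)
  have "(\<Sum>\<eta>\<in>configs Lx. Q V r par H \<beta> \<tau> s x \<eta> * g \<eta>) = (\<Sum>\<eta>\<in>configs Lx. N \<eta> * g \<eta>) / ZG \<beta> par ST x LV \<tau> s (\<lambda>_. 1)"
    unfolding Qe by (simp add: sum_divide_distrib)
  also have "(\<Sum>\<eta>\<in>configs Lx. N \<eta> * g \<eta>) = (\<Sum>\<sigma>\<in>{\<sigma>\<in>X. \<sigma> x = s}. W \<sigma> * g (restrict \<sigma> Lx))"
    unfolding N_def by (rule fiber[OF finX finLx val])
  also have "\<dots> = ZG \<beta> par ST x LV \<tau> s (\<lambda>\<sigma>. g (restrict \<sigma> Lx))"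
    unfolding ZG_def X_def W_def ..
  finally show ?thesis unfolding ST_def LV_def Lx_def .
qed

lemma Q_marg:
  assumes tree: "rooted_tree V r par" and hat: "root_subtree V r par H" and v: "v \<in> H"
    and wch: "w \<in> children H r par v"
    and tau: "\<forall>u\<in>leaves V r par. \<tau> u \<in> {-1, 1}" and s: "s = 1 \<or> s = -1"
    and gl: "\<And>\<eta> \<eta>'. (\<forall>u\<in>hleaves V r par H w. \<eta> u = \<eta>' u) \<Longrightarrow> g \<eta> = g \<eta>'"
  shows "(\<Sum>\<eta>\<in>configs (hleaves V r par H v). Q V r par H \<beta> \<tau> s v \<eta> * g \<eta>) =
    (exp (\<beta>*s) * ZG \<beta> par (subtree V par w) w (leaves V r par) \<tau> 1 (\<lambda>_. 1) *
        (\<Sum>\<eta>\<in>configs (hleaves V r par H w). Q V r par H \<beta> \<tau> 1 w \<eta> * g \<eta>)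
     + exp (-(\<beta>*s)) * ZG \<beta> par (subtree V par w) w (leaves V r par) \<tau> (-1) (\<lambda>_. 1) *
        (\<Sum>\<eta>\<in>configs (hleaves V r par H w). Q V r par H \<beta> \<tau> (-1) w \<eta> * g \<eta>)) /
    (exp (\<beta>*s) * ZG \<beta> par (subtree V par w) w (leaves V r par) \<tau> 1 (\<lambda>_. 1)
     + exp (-(\<beta>*s)) * ZG \<beta> par (subtree V par w) w (leaves V r par) \<tau> (-1) (\<lambda>_. 1))"
proof -
  note HF = H_facts[OF tree hat]
  define ST where "ST = subtree V par v"
  define Sw where "Sw = subtree V par w"
  define LV where "LV = leaves V r par"
  define Lv where "Lv = hleaves V r par H v"
  define Lw where "Lw = hleaves V r par H w"
  define f where "f \<sigma> = g (restrict \<sigma> Lv)" for \<sigma>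
  define z where "z t = ZG \<beta> par Sw w LV \<tau> t (\<lambda>_. 1)" for t
  define G where "G t = (\<Sum>\<eta>\<in>configs Lw. Q V r par H \<beta> \<tau> t w \<eta> * g \<eta>)" for t
  have wp: "w \<in> H" "w \<in> V" "w \<noteq> r" "par w = v" using wch HF unfolding children_def by auto
  have vV: "v \<in> V" using v HF by auto
  have finST: "finite ST" unfolding ST_def using HF subtree_sub by (metis finite_subset)
  have vST: "v \<in> ST" unfolding ST_def using vV by (rule subtree_self)
  have SwST: "Sw \<subseteq> ST" unfolding Sw_def ST_def by (rule subtree_mono[where par=par and w=w and v=v and V=V, OF wp(4)])
  have vSw: "v \<notin> Sw" unfolding Sw_def by (rule not_in_child_subtree[OF tree wp(2-4)])
  have wSw: "w \<in> Sw" unfolding Sw_def using wp(2) by (rule subtree_self)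
  have finSw: "finite Sw" using finite_subset[OF SwST finST] .
  have clA: "\<forall>u\<in>(ST - Sw) - {v}. par u \<in> ST - Sw"
  proof
    fix u assume u: "u \<in> (ST - Sw) - {v}"
    then have "u \<in> V" unfolding ST_def subtree_def by auto
    then show "par u \<in> ST - Sw" using u subtree_cl[OF tree] subtree_par[OF \<open>u \<in> V\<close>]
      unfolding ST_def Sw_def by blast
  qed
  have clD: "\<forall>u\<in>Sw - {w}. par u \<in> Sw" unfolding Sw_def using subtree_cl[OF tree] by blast
  have LwLv: "Lw \<subseteq> Lv" unfolding Lw_def Lv_def hleaves_def using subtree_mono[where par=par and w=w and v=v and V=V, OF wp(4)] by auto
  have LwSw: "Lw \<subseteq> Sw" unfolding Lw_def Sw_def hleaves_def by auto
  have lf: "f \<sigma> = f \<sigma>'" if "\<forall>u\<in>Sw. \<sigma> u = \<sigma>' u" for \<sigma> \<sigma>'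
    unfolding f_def by (rule gl) (use that LwLv LwSw Lw_def in auto)
  have fw: "f = (\<lambda>\<sigma>. g (restrict \<sigma> Lw))"
    unfolding f_def by (rule ext, rule gl) (use LwLv Lw_def in auto)
  have tauS: "\<forall>u\<in>LV \<inter> ST. \<tau> u = 1 \<or> \<tau> u = -1" using tau unfolding LV_def by auto
  have vLV: "v \<notin> LV" unfolding LV_def using v HF by auto
  have wLV: "w \<notin> LV" unfolding LV_def using wp HF by auto
  have zp: "z t > 0" if "t = 1 \<or> t = -1" for t unfolding z_def
    by (rule ZG_pos[OF finSw wSw that]) (use tauS SwST wLV in auto)
  have Ap: "ZG \<beta> par (ST - Sw) v LV \<tau> s (\<lambda>_. 1) > 0"
    by (rule ZG_pos) (use finST vST vSw s tauS vLV in auto)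
  have sp1: "ZG \<beta> par ST v LV \<tau> s f = ZG \<beta> par (ST - Sw) v LV \<tau> s (\<lambda>_. 1) *
     (exp (\<beta>*s) * ZG \<beta> par Sw w LV \<tau> 1 f + exp (-(\<beta>*s)) * ZG \<beta> par Sw w LV \<tau> (-1) f)"
    by (rule ZG_split[OF finST SwST vST vSw wSw wp(4) clA clD lf])
  have sp2: "ZG \<beta> par ST v LV \<tau> s (\<lambda>_. 1) = ZG \<beta> par (ST - Sw) v LV \<tau> s (\<lambda>_. 1) *
     (exp (\<beta>*s) * z 1 + exp (-(\<beta>*s)) * z (-1))"
    unfolding z_def by (rule ZG_split[OF finST SwST vST vSw wSw wp(4) clA clD]) simp
  have ZGf: "ZG \<beta> par Sw w LV \<tau> t f = z t * G t" if "t = 1 \<or> t = -1" for t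
  proof -
    have "G t = ZG \<beta> par Sw w LV \<tau> t f / z t"
      unfolding G_def fw z_def Sw_def LV_def Lw_def by (rule Q_sum[OF tree hat wp(1) tau that])
    then show ?thesis using zp[OF that] by simp
  qed
  have "(\<Sum>\<eta>\<in>configs Lv. Q V r par H \<beta> \<tau> s v \<eta> * g \<eta>) = ZG \<beta> par ST v LV \<tau> s f / ZG \<beta> par ST v LV \<tau> s (\<lambda>_. 1)"
    unfolding f_def ST_def LV_def Lv_def by (rule Q_sum[OF tree hat v tau s])
  also have "\<dots> = (exp (\<beta>*s) * z 1 * G 1 + exp (-(\<beta>*s)) * z (-1) * G (-1)) / (exp (\<beta>*s) * z 1 + exp (-(\<beta>*s)) * z (-1))"
    unfolding sp1 sp2 ZGf[of 1, simplified] ZGf[of "-1", simplified] using Ap by (simp add: mult.assoc)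
  finally show ?thesis unfolding z_def G_def Sw_def LV_def Lv_def Lw_def .
qed

lemma adm_cong: "(\<forall>u\<in>B. \<tau> u = \<tau>' u) \<Longrightarrow> adm S B \<tau> = adm S B \<tau>'"
  unfolding adm_def by auto

lemma xhat_local:
  assumes hat: "root_subtree V r par H" and w: "w \<in> H"
    and ag: "\<forall>u\<in>hleaves V r par H w. \<eta> u = \<eta>' u"
  shows "xhat V r par H \<beta> \<eta> w = xhat V r par H \<beta> \<eta>' w"
proof -
  have wV: "w \<in> V" using hat w unfolding root_subtree_def by auto
  have adm_eq: "adm S (hleaves V r par H w) \<eta> = adm S (hleaves V r par H w) \<eta>'" for S
    by (rule adm_cong[OF ag])
  show ?thesis
  proof (cases "w \<in> leaves H r par")
    case True
    then have "w \<in> hleaves V r par H w" unfolding hleaves_def using subtree_self[OF wV] by auto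
    then show ?thesis unfolding xhat_def using ag True by simp
  next
    case False
    then show ?thesis unfolding xhat_def xhat_real_def muhat_def gibbs_prob_def
      using adm_eq unfolding hleaves_def by simp
  qed
qed



theorem mainTheorem9:
  fixes V H :: "'v set" and r :: 'v and par :: "'v \<Rightarrow> 'v"
    and \<beta> :: real and \<tau> :: "'v \<Rightarrow> real" and v :: 'v
  assumes tree: "rooted_tree V r par"
    and beta: "\<beta> > 0"
    and tau: "\<forall>u\<in>leaves V r par. \<tau> u \<in> {-1, 1}"
    and hat: "root_subtree V r par H"
    and v: "v \<in> H - leaves H r par"
  shows "mm V r par H \<beta> \<tau> v =
    tanh \<beta> * (\<Sum>w\<in>children H r par v.
       Dstar V r par \<beta> \<tau> w *
       ((\<Sum>\<eta>\<in>configs (hleaves V r par H w).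
            Q V r par H \<beta> \<tau> 1 w \<eta> * fth (tanh \<beta>) (xhat V r par H \<beta> \<eta> w))
      - (\<Sum>\<eta>\<in>configs (hleaves V r par H w).
            Q V r par H \<beta> \<tau> (-1) w \<eta> * fth (tanh \<beta>) (xhat V r par H \<beta> \<eta> w))))"
proof -
  note HF = H_facts[OF tree hat]
  define Lv where "Lv = hleaves V r par H v"
  define ch where "ch = children H r par v"
  define gw where "gw w \<eta> = fth (tanh \<beta>) (xhat V r par H \<beta> \<eta> w)" for w \<eta>
  define G where "G t w = (\<Sum>\<eta>\<in>configs (hleaves V r par H w). Q V r par H \<beta> \<tau> t w \<eta> * gw w \<eta>)" for t w
  have vH: "v \<in> H" "v \<notin> leaves H r par" using v by auto
  have finch: "finite ch" unfolding ch_def children_def using HF by auto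
  have xr: "xhat_real V r par H \<beta> \<eta> v = (\<Sum>w\<in>ch. gw w \<eta>)" if "\<eta> \<in> configs Lv" for \<eta>
    unfolding ch_def gw_def by (rule xhat_rec[OF tree hat vH that[unfolded Lv_def]])
  have sw: "(\<Sum>\<eta>\<in>configs Lv. Q V r par H \<beta> \<tau> s v \<eta> * xhat_real V r par H \<beta> \<eta> v)
      = (\<Sum>w\<in>ch. \<Sum>\<eta>\<in>configs Lv. Q V r par H \<beta> \<tau> s v \<eta> * gw w \<eta>)" for s
  proof -
    have "(\<Sum>\<eta>\<in>configs Lv. Q V r par H \<beta> \<tau> s v \<eta> * xhat_real V r par H \<beta> \<eta> v)
       = (\<Sum>\<eta>\<in>configs Lv. \<Sum>w\<in>ch. Q V r par H \<beta> \<tau> s v \<eta> * gw w \<eta>)"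
      by (rule sum.cong[OF refl]) (simp add: xr sum_distrib_left)
    also have "\<dots> = (\<Sum>w\<in>ch. \<Sum>\<eta>\<in>configs Lv. Q V r par H \<beta> \<tau> s v \<eta> * gw w \<eta>)" by (rule sum.swap)
    finally show ?thesis .
  qed
  have perw: "(\<Sum>\<eta>\<in>configs Lv. Q V r par H \<beta> \<tau> 1 v \<eta> * gw w \<eta>) - (\<Sum>\<eta>\<in>configs Lv. Q V r par H \<beta> \<tau> (-1) v \<eta> * gw w \<eta>)
     = tanh \<beta> * (Dstar V r par \<beta> \<tau> w * (G 1 w - G (-1) w))" if wch: "w \<in> ch" for w
  proof -
    have wp: "w \<in> H" "w \<in> V" using wch HF unfolding ch_def children_def by auto
    have gl: "gw w \<eta> = gw w \<eta>'" if "\<forall>u\<in>hleaves V r par H w. \<eta> u = \<eta>' u" for \<eta> \<eta>'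
      unfolding gw_def using xhat_local[OF hat wp(1) that] by simp
    define z where "z t = ZG \<beta> par (subtree V par w) w (leaves V r par) \<tau> t (\<lambda>_. 1)" for t
    have finSw: "finite (subtree V par w)" using HF subtree_sub by (metis finite_subset)
    have zp: "z t > 0" if "t = 1 \<or> t = -1" for t unfolding z_def
      by (rule ZG_pos[OF finSw subtree_self[OF wp(2)] that]) (use tau wp HF in auto)
    have m1: "(\<Sum>\<eta>\<in>configs Lv. Q V r par H \<beta> \<tau> 1 v \<eta> * gw w \<eta>) =
       (exp \<beta> * z 1 * G 1 w + exp (-\<beta>) * z (-1) * G (-1) w) / (exp \<beta> * z 1 + exp (-\<beta>) * z (-1))"
      using Q_marg[where s=1 and \<beta>=\<beta>, OF tree hat vH(1) wch[unfolded ch_def] tau _ gl]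
      unfolding Lv_def z_def G_def by simp
    have m2: "(\<Sum>\<eta>\<in>configs Lv. Q V r par H \<beta> \<tau> (-1) v \<eta> * gw w \<eta>) =
       (exp (-\<beta>) * z 1 * G 1 w + exp \<beta> * z (-1) * G (-1) w) / (exp (-\<beta>) * z 1 + exp \<beta> * z (-1))"
      using Q_marg[where s="-1" and \<beta>=\<beta>, OF tree hat vH(1) wch[unfolded ch_def] tau _ gl]
      unfolding Lv_def z_def G_def by simp
    have xs: "xstar V r par \<beta> \<tau> w = ln (z 1 / z (-1))"
      unfolding xstar_def mu_ZG[OF tree wp(2)] z_def[symmetric] using zp[of 1] zp[of "-1"] by simp
    show ?thesis unfolding m1 m2 A3[OF zp[of 1, simplified] zp[of "-1", simplified]] Dstar_def xs
      by (simp add: mult.assoc)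
  qed
  have "mm V r par H \<beta> \<tau> v = (\<Sum>w\<in>ch. (\<Sum>\<eta>\<in>configs Lv. Q V r par H \<beta> \<tau> 1 v \<eta> * gw w \<eta>)
       - (\<Sum>\<eta>\<in>configs Lv. Q V r par H \<beta> \<tau> (-1) v \<eta> * gw w \<eta>))"
    unfolding mm_def Lv_def[symmetric] sw sum_subtractf ..
  also have "\<dots> = (\<Sum>w\<in>ch. tanh \<beta> * (Dstar V r par \<beta> \<tau> w * (G 1 w - G (-1) w)))"
    by (rule sum.cong[OF refl]) (rule perw)
  also have "\<dots> = tanh \<beta> * (\<Sum>w\<in>ch. Dstar V r par \<beta> \<tau> w * (G 1 w - G (-1) w))"
    by (simp add: sum_distrib_left)
  finally show ?thesis unfolding ch_def G_def gw_def .
qed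

end
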